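(* Let $a,b,c\in\mathbb{R}$ with $b>0$ and $-a/b=2n+3$. Let $r(t,\theta)$ be the support function of a family of surfaces in $\mathscr{W}$ evolving by the linear Hopf flow, i.e. $\partial_t r=b\,\partial_\theta^2r+a\cot\theta\,\partial_\theta r+(a+b)r+c$, and let $s(t,\theta)$ be the corresponding astigmatism. Then for $\theta\in(0,\pi)$, $$\frac{\partial}{\partial t}\left(\frac{s}{\sin^{n+2}\theta}\right)=b\,\mathscr{L}^n_n\left(\frac{s}{\sin^{n+2}\theta}\right),$$ where $\mathscr{L}^\mu_\nu=\partial_\theta^2+\cot\theta\,\partial_\theta+(\nu+1)\nu-\frac{\mu^2}{\sin^2\theta}$.
   Context: $\mathscr{W}$ is the set of embedded $C^2$-smooth topological 2-spheres in $\mathbb{R}^3$ that are rotationally symmetric and strictly convex. A surface in $\mathscr{W}$ is parametrised by the inverse Gauss map with $\theta\in[0,\pi]$ the angle between the outward normal and the symmetry axis. The support function is $r=\vec X\cdot\hat n$, the radii of curvature are $r_1=\frac{\cos^2\theta}{\sin\theta}\partial_\theta\left(\frac{r}{\cos\theta}\right)$, $r_2=\partial_\theta^2 r+r$, and the astigmatism is $s=r_2-r_1$. The linear Hopf flow is $(\partial_t\vec X)^\perp=(ar_1+br_2+c)\hat n$, which is equivalent to the stated evolution of the support function. The support function is assumed differentiable enough in $t,\theta$ for all derivatives appearing to exist. *)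

theory Defs
  imports "HOL-Analysis.Analysis"
begin

text \<open>Functions of two variables r t \<theta> (time t, Gauss-map angle \<theta>).\<close>

definition dt :: "(real \<Rightarrow> real \<Rightarrow> real) \<Rightarrow> real \<Rightarrow> real \<Rightarrow> real" where
  "dt f t \<theta> = deriv (\<lambda>x. f x \<theta>) t"

definition dth :: "(real \<Rightarrow> real \<Rightarrow> real) \<Rightarrow> real \<Rightarrow> real \<Rightarrow> real" where
  "dth f t \<theta> = deriv (\<lambda>x. f t x) \<theta>"

fun pdiff :: "bool list \<Rightarrow> (real \<Rightarrow> real \<Rightarrow> real) \<Rightarrow> real \<Rightarrow> real \<Rightarrow> real" where
  "pdiff [] f = f"
| "pdiff (d # w) f = (if d then dt (pdiff w f) else dth (pdiff w f))"

definition Ck_on :: "nat \<Rightarrow> (real \<Rightarrow> real \<Rightarrow> real) \<Rightarrow> (real \<times> real) set \<Rightarrow> bool" where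
  "Ck_on k f U \<longleftrightarrow>
     (\<forall>w. length w < k \<longrightarrow> (\<forall>(t,\<theta>)\<in>U.
         (\<lambda>x. pdiff w f x \<theta>) differentiable (at t) \<and> (\<lambda>x. pdiff w f t x) differentiable (at \<theta>)))
   \<and> (\<forall>w. length w \<le> k \<longrightarrow> continuous_on U (\<lambda>(t,\<theta>). pdiff w f t \<theta>))"

text \<open>Radii of curvature. r1 = cos^2/sin * d/d\<theta>(r/cos) written out as cot * r_\<theta> + r
  (the two agree wherever cos \<noteq> 0; the expanded form is the continuous extension).\<close>
definition rad1 :: "(real \<Rightarrow> real \<Rightarrow> real) \<Rightarrow> real \<Rightarrow> real \<Rightarrow> real" where
  "rad1 r t \<theta> = cot \<theta> * dth r t \<theta> + r t \<theta>"

definition rad2 :: "(real \<Rightarrow> real \<Rightarrow> real) \<Rightarrow> real \<Rightarrow> real \<Rightarrow> real" where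
  "rad2 r t \<theta> = dth (dth r) t \<theta> + r t \<theta>"

definition astig :: "(real \<Rightarrow> real \<Rightarrow> real) \<Rightarrow> real \<Rightarrow> real \<Rightarrow> real" where
  "astig r t \<theta> = rad2 r t \<theta> - rad1 r t \<theta>"

definition legendre_op :: "real \<Rightarrow> real \<Rightarrow> (real \<Rightarrow> real) \<Rightarrow> real \<Rightarrow> real" where
  "legendre_op \<mu> \<nu> f \<theta> = deriv (deriv f) \<theta> + cot \<theta> * deriv f \<theta>
      + ((\<nu> + 1) * \<nu> - \<mu>\<^sup>2 / (sin \<theta>)\<^sup>2) * f \<theta>"

end

theory Submission
  imports Defs
begin

lemma schwarz:
  fixes f :: "real \<Rightarrow> real \<Rightarrow> real"
  assumes U: "open U" "(t0,y0) \<in> U"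
  and dx: "\<And>x y. (x,y)\<in>U \<Longrightarrow> (\<lambda>x. f x y) differentiable (at x)"
  and dy: "\<And>x y. (x,y)\<in>U \<Longrightarrow> (\<lambda>y. f x y) differentiable (at y)"
  and dxy: "\<And>x y. (x,y)\<in>U \<Longrightarrow> (\<lambda>x. dth f x y) differentiable (at x)"
  and c2: "continuous_on U (\<lambda>(x,y). dt (dth f) x y)"
  shows "dth (dt f) t0 y0 = dt (dth f) t0 y0"
proof -
  obtain e where e: "e > 0" "ball (t0,y0) e \<subseteq> U" using U openE by blast
  define d where "d = e/3"
  have d: "d > 0" using e d_def by simp
  have box: "(x,y) \<in> U" if "\<bar>x-t0\<bar> \<le> d" "\<bar>y-y0\<bar> \<le> d" for x y
  proof -
    have "dist (t0,y0) (x,y) \<le> \<bar>t0-x\<bar> + \<bar>y0-y\<bar>"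
      using sqrt_sum_squares_le_sum_abs[of "t0-x" "y0-y"] by (simp add: dist_Pair_Pair dist_real_def)
    also have "\<dots> < e" using that d_def e by linarith
    finally show ?thesis using e by auto
  qed
  define a where "a = y0 - d"
  define X where "X = {t0-d<..<t0+d}"
  have X: "open X" "convex X" "t0 \<in> X" using d by (auto simp: X_def)
  have ftc: "((\<lambda>u. dth f x u) has_integral (f x y - f x a)) {a..y}"
    if "x \<in> X" "y \<in> {a..y0+d}" for x y
  proof (rule fundamental_theorem_of_calculus)
    show "a \<le> y" using that by simp
    fix u assume u: "u \<in> {a..y}"
    have "(x,u) \<in> U" using u that by (intro box) (auto simp: X_def a_def)
    then have "((\<lambda>u. f x u) has_real_derivative dth f x u) (at u)"
      using dy unfolding dth_def by (simp add: DERIV_deriv_iff_real_differentiable)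
    then show "((\<lambda>u. f x u) has_vector_derivative dth f x u) (at u within {a..y})"
      by (simp add: has_real_derivative_iff_has_vector_derivative has_vector_derivative_at_within)
  qed
  have cont: "continuous_on {a..y0+d} (\<lambda>u. dt (dth f) x u)" if "x \<in> X" for x
  proof (rule continuous_on_compose2[OF c2, where f="\<lambda>u. (x,u)", simplified])
    show "continuous_on {a..y0+d} (Pair x)" by (intro continuous_intros)
    show "Pair x ` {a..y0 + d} \<subseteq> U" using that by (auto simp: X_def a_def intro!: box)
  qed
  have dtf: "dt f t0 y = dt f t0 a + integral {a..y} (\<lambda>u. dt (dth f) t0 u)"
    if y: "y \<in> {a..y0+d}" for y
  proof -
    have "((\<lambda>x. integral (cbox a y) (\<lambda>u. dth f x u)) has_field_derivative
            integral (cbox a y) (\<lambda>u. dt (dth f) t0 u)) (at t0 within X)"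
    proof (rule leibniz_rule_field_derivative)
      fix x u assume xu: "x \<in> X" "u \<in> cbox a y"
      have "(x,u) \<in> U" using xu y by (intro box) (auto simp: X_def a_def)
      then show "((\<lambda>x. dth f x u) has_field_derivative dt (dth f) x u) (at x within X)"
        using dxy unfolding dt_def
        by (simp add: DERIV_deriv_iff_real_differentiable has_field_derivative_at_within)
    next
      fix x assume x: "x \<in> X"
      show "(\<lambda>u. dth f x u) integrable_on cbox a y"
        using ftc[OF x y] by (auto simp: has_integral_integrable)
    next
      show "continuous_on (X \<times> cbox a y) (\<lambda>(x, u). dt (dth f) x u)"
        using y by (intro continuous_on_subset[OF c2]) (auto simp: X_def a_def intro!: box)
    qed (simp_all add: X)
    then have D1: "((\<lambda>x. integral {a..y} (\<lambda>u. dth f x u)) has_field_derivative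
            integral {a..y} (\<lambda>u. dt (dth f) t0 u)) (at t0)"
      by (simp add: at_within_open[OF X(3) X(1)] cbox_interval)
    have "(x,a) \<in> U" if "x \<in> X" for x using that d by (intro box) (auto simp: X_def a_def)
    have D0: "((\<lambda>x. f x a) has_field_derivative dt f t0 a) (at t0)"
      using dx[of t0 a] box[of t0 a] d unfolding dt_def
      by (simp add: DERIV_deriv_iff_real_differentiable a_def)
    have "((\<lambda>x. f x y) has_field_derivative dt f t0 a + integral {a..y} (\<lambda>u. dt (dth f) t0 u)) (at t0)"
    proof (rule has_field_derivative_transform_within_open[OF DERIV_add[OF D0 D1] X(1) X(3)])
      fix x assume "x \<in> X"
      then show "f x a + integral {a..y} (\<lambda>u. dth f x u) = f x y"
        using ftc[OF _ y, of x] by (simp add: integral_unique)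
    qed
    then show ?thesis unfolding dt_def by (rule DERIV_imp_deriv)
  qed
  have "((\<lambda>y. integral {a..y} (\<lambda>u. dt (dth f) t0 u)) has_real_derivative dt (dth f) t0 y0) (at y0 within {a..y0+d})"
    using cont[OF X(3)] d by (intro integral_has_real_derivative) (auto simp: a_def)
  then have "((\<lambda>y. integral {a..y} (\<lambda>u. dt (dth f) t0 u)) has_real_derivative dt (dth f) t0 y0) (at y0)"
    using d by (subst (asm) at_within_interior) (auto simp: a_def)
  then have "((\<lambda>y. dt f t0 a + integral {a..y} (\<lambda>u. dt (dth f) t0 u)) has_real_derivative dt (dth f) t0 y0) (at y0)"
    by (rule DERIV_add[OF DERIV_const, simplified])
  then have "((\<lambda>y. dt f t0 y) has_real_derivative dt (dth f) t0 y0) (at y0)"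
  proof (rule has_field_derivative_transform_within_open[where S="{a<..<y0+d}"])
    show "y0 \<in> {a<..<y0+d}" using d by (auto simp: a_def)
  next
    fix x assume "x \<in> {a<..<y0+d}"
    then have "x \<in> {a..y0+d}" by auto
    from dtf[OF this] show "dt f t0 a + integral {a..x} (\<lambda>u. dt (dth f) t0 u) = dt f t0 x" by simp
  qed simp
  then show ?thesis unfolding dth_def by (rule DERIV_imp_deriv)
qed


lemma dth_deriv: "(\<lambda>y. f x y) differentiable at y \<Longrightarrow> ((\<lambda>y. f x y) has_real_derivative dth f x y) (at y within S)"
  by (simp add: dth_def DERIV_deriv_iff_real_differentiable has_field_derivative_at_within)

lemma dt_deriv: "(\<lambda>x. f x y) differentiable at x \<Longrightarrow> ((\<lambda>x. f x y) has_real_derivative dt f x y) (at x within S)"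
  by (simp add: dt_def DERIV_deriv_iff_real_differentiable has_field_derivative_at_within)

lemma cot_sq: "sin y \<noteq> 0 \<Longrightarrow> inverse ((sin y)^2) = 1 + (cot y)^2"
proof -
  assume "sin y \<noteq> 0"
  moreover have "sin y ^ 2 + cos y ^ 2 = 1" by simp
  ultimately show ?thesis by (simp add: cot_def power_divide field_simps)
qed

lemma Dcot: "sin y \<noteq> 0 \<Longrightarrow> (cot has_real_derivative -(1 + (cot y)^2)) (at y within S)"
  using DERIV_cot[of y] cot_sq[of y] by (simp add: has_field_derivative_at_within)

lemma DW: "sin y \<noteq> 0 \<Longrightarrow> ((\<lambda>y. inverse (sin y ^ k)) has_real_derivative -(real k * cot y * inverse (sin y ^ k))) (at y within S)"
proof -
  assume s: "sin y \<noteq> 0"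
  have D: "((\<lambda>y. inverse (sin y ^ k)) has_real_derivative
      - (inverse (sin y ^ k) * (real k * sin y ^ (k - 1) * cos y) * inverse (sin y ^ k))) (at y within S)"
    using s by (intro derivative_eq_intros DERIV_inverse) auto
  have eq: "inverse (sin y ^ k) * (real k * sin y ^ (k - 1) * cos y) * inverse (sin y ^ k)
      = real k * cot y * inverse (sin y ^ k)"
  proof (cases k)
    case (Suc m)
    then show ?thesis using s by (simp add: cot_def field_simps)
  qed simp
  show ?thesis using D unfolding eq .
qed


theorem proposition3p3:
  fixes a b c :: real and n :: nat and r :: "real \<Rightarrow> real \<Rightarrow> real" and T :: "real set"
  assumes "b > 0"
    and "- a / b = 2 * real n + 3"
    and "open T"
    and "Ck_on 4 r (T \<times> {0<..<pi})"
    and "\<And>t \<theta>. t \<in> T \<Longrightarrow> 0 < \<theta> \<Longrightarrow> \<theta> < pi \<Longrightarrow>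
           dt r t \<theta> = b * dth (dth r) t \<theta> + a * cot \<theta> * dth r t \<theta> + (a + b) * r t \<theta> + c"
    and "t \<in> T" and "0 < \<theta>" and "\<theta> < pi"
  shows "dt (\<lambda>t' \<theta>'. astig r t' \<theta>' / (sin \<theta>') ^ (n + 2)) t \<theta>
         = b * legendre_op (real n) (real n) (\<lambda>\<theta>'. astig r t \<theta>' / (sin \<theta>') ^ (n + 2)) \<theta>"
proof -
  define U where "U = T \<times> {0<..<pi::real}"
  define I where "I = {0<..<pi::real}"
  have oU: "open U" "open I" using assms(3) by (auto simp: U_def I_def intro: open_Times)
  have tU: "(t,\<theta>) \<in> U" "\<theta> \<in> I" using assms(6-8) by (auto simp: U_def I_def)
  have sinI: "sin y \<noteq> 0" if "y \<in> I" for y using that sin_gt_zero[of y] by (auto simp: I_def)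
  have Ck: "Ck_on 4 r U" using assms(4) by (simp add: U_def)
  have dT: "(\<lambda>x. pdiff w r x y) differentiable at x" if "length w < 4" "(x,y) \<in> U" for w x y
    using Ck that unfolding Ck_on_def by fast
  have dY: "(\<lambda>y. pdiff w r x y) differentiable at y" if "length w < 4" "(x,y) \<in> U" for w x y
    using Ck that unfolding Ck_on_def by fast
  have CC: "continuous_on U (\<lambda>(x,y). pdiff w r x y)" if "length w \<le> 4" for w
    using Ck that unfolding Ck_on_def by blast
  define r1 where "r1 = dth r"
  define r2 where "r2 = dth r1"
  define r3 where "r3 = dth r2"
  define r4 where "r4 = dth r3"
  have S1: "dth (dt r) x y = dt r1 x y" if "(x,y) \<in> U" for x y
    unfolding r1_def
  proof (rule schwarz[OF oU(1) that])
    show "(\<lambda>x. r x y) differentiable at x" if "(x,y) \<in> U" for x y using dT[of "[]"] that by simp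
    show "(\<lambda>y. r x y) differentiable at y" if "(x,y) \<in> U" for x y using dY[of "[]"] that by simp
    show "(\<lambda>x. dth r x y) differentiable at x" if "(x,y) \<in> U" for x y using dT[of "[False]"] that by simp
    show "continuous_on U (\<lambda>(x, y). dt (dth r) x y)" using CC[of "[True,False]"] by simp
  qed
  have S2: "dth (dt r1) x y = dt r2 x y" if "(x,y) \<in> U" for x y
    unfolding r2_def
  proof (rule schwarz[OF oU(1) that])
    show "(\<lambda>x. r1 x y) differentiable at x" if "(x,y) \<in> U" for x y using dT[of "[False]"] that by (simp add: r1_def)
    show "(\<lambda>y. r1 x y) differentiable at y" if "(x,y) \<in> U" for x y using dY[of "[False]"] that by (simp add: r1_def)
    show "(\<lambda>x. dth r1 x y) differentiable at x" if "(x,y) \<in> U" for x y using dT[of "[False,False]"] that by (simp add: r1_def)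
    show "continuous_on U (\<lambda>(x, y). dt (dth r1) x y)" using CC[of "[True,False,False]"] by (simp add: r1_def)
  qed
  have tyU: "(t,y) \<in> U" if "y \<in> I" for y using that assms(6) by (simp add: U_def I_def)
  have D0: "((\<lambda>y. r t y) has_real_derivative r1 t y) (at y within S)" if "y \<in> I" for y S
    unfolding r1_def by (rule dth_deriv) (use dY[of "[]"] tyU[OF that] in simp)
  have D1: "((\<lambda>y. r1 t y) has_real_derivative r2 t y) (at y within S)" if "y \<in> I" for y S
    unfolding r2_def by (rule dth_deriv) (use dY[of "[False]"] tyU[OF that] in \<open>simp add: r1_def\<close>)
  have D2: "((\<lambda>y. r2 t y) has_real_derivative r3 t y) (at y within S)" if "y \<in> I" for y S
    unfolding r3_def by (rule dth_deriv) (use dY[of "[False,False]"] tyU[OF that] in \<open>simp add: r1_def r2_def\<close>)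
  have D3: "((\<lambda>y. r3 t y) has_real_derivative r4 t y) (at y within S)" if "y \<in> I" for y S
    unfolding r4_def by (rule dth_deriv) (use dY[of "[False,False,False]"] tyU[OF that] in \<open>simp add: r1_def r2_def r3_def\<close>)
  have T1: "((\<lambda>x. r1 x \<theta>) has_real_derivative dt r1 t \<theta>) (at t)"
    by (rule dt_deriv) (use dT[of "[False]"] tU in \<open>simp add: r1_def\<close>)
  have T2: "((\<lambda>x. r2 x \<theta>) has_real_derivative dt r2 t \<theta>) (at t)"
    by (rule dt_deriv) (use dT[of "[False,False]"] tU in \<open>simp add: r1_def r2_def\<close>)
  define q :: "real \<Rightarrow> real" where "q y = 1 + (cot y)^2" for y
  have Dc: "(cot has_real_derivative -q y) (at y within S)" if "y \<in> I" for y S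
    unfolding q_def using Dcot sinI[OF that] by blast
  have Dq: "(q has_real_derivative -(2 * cot y * q y)) (at y within S)" if "y \<in> I" for y S
    unfolding q_def[abs_def] using that
    by (auto intro!: derivative_eq_intros Dc simp: algebra_simps q_def power2_eq_square)
  define k where "k = n + 2"
  define W :: "real \<Rightarrow> real" where "W y = inverse (sin y ^ k)" for y
  have DWk: "(W has_real_derivative -(real k * cot y * W y)) (at y within S)" if "y \<in> I" for y S
    unfolding W_def[abs_def] using DW[OF sinI[OF that]] by (simp add: W_def)
  define E where "E y = b*r2 t y + a*cot y*r1 t y + (a+b)*r t y + c" for y
  define E1 where "E1 y = b*r3 t y - a*q y*r1 t y + a*cot y*r2 t y + (a+b)*r1 t y" for y
  define E2 where "E2 y = b*r4 t y + 2*a*cot y*q y*r1 t y - 2*a*q y*r2 t y + a*cot y*r3 t y + (a+b)*r2 t y" for y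
  have flow: "dt r t y = E y" if "y \<in> I" for y
    using assms(5)[OF assms(6)] that by (simp add: I_def E_def r1_def r2_def)
  have DE: "(E has_real_derivative E1 y) (at y)" if "y \<in> I" for y
    unfolding E_def[abs_def] E1_def using that
    by (auto intro!: derivative_eq_intros D0 D1 D2 Dc simp: algebra_simps)
  have dtr1: "dt r1 t y = E1 y" if "y \<in> I" for y
  proof -
    have "((\<lambda>y. dt r t y) has_real_derivative E1 y) (at y)"
      by (rule has_field_derivative_transform_within_open[OF DE[OF that] oU(2) that]) (simp add: flow)
    then have "dth (dt r) t y = E1 y" unfolding dth_def by (rule DERIV_imp_deriv)
    then show ?thesis using S1[OF tyU[OF that]] by simp
  qed
  have DE1: "(E1 has_real_derivative E2 \<theta>) (at \<theta>)"
    unfolding E1_def[abs_def] E2_def using tU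
    by (auto intro!: derivative_eq_intros D1 D2 D3 Dc Dq simp: algebra_simps)
  have dtr2: "dt r2 t \<theta> = E2 \<theta>"
  proof -
    have "((\<lambda>y. dt r1 t y) has_real_derivative E2 \<theta>) (at \<theta>)"
      by (rule has_field_derivative_transform_within_open[OF DE1 oU(2) tU(2)]) (simp add: dtr1)
    then have "dth (dt r1) t \<theta> = E2 \<theta>" unfolding dth_def by (rule DERIV_imp_deriv)
    then show ?thesis using S2[OF tU(1)] by simp
  qed
  have ast: "astig r x y = r2 x y - cot y * r1 x y" for x y
    by (simp add: astig_def rad1_def rad2_def r1_def r2_def)
  have LHS: "dt (\<lambda>t' \<theta>'. astig r t' \<theta>' / (sin \<theta>') ^ (n + 2)) t \<theta> = (E2 \<theta> - cot \<theta> * E1 \<theta>) * W \<theta>"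
  proof -
    have "((\<lambda>x. (r2 x \<theta> - cot \<theta> * r1 x \<theta>) * W \<theta>) has_real_derivative (dt r2 t \<theta> - cot \<theta> * dt r1 t \<theta>) * W \<theta>) (at t)"
      by (intro DERIV_cmult_right DERIV_diff DERIV_cmult T1 T2)
    then have "deriv (\<lambda>x. (r2 x \<theta> - cot \<theta> * r1 x \<theta>) * W \<theta>) t = (dt r2 t \<theta> - cot \<theta> * dt r1 t \<theta>) * W \<theta>"
      by (rule DERIV_imp_deriv)
    then show ?thesis unfolding dt_def ast W_def k_def using dtr2 dtr1[OF tU(2)]
      by (simp add: divide_inverse dt_def)
  qed
  define g where "g y = astig r t y / (sin y) ^ (n + 2)" for y
  define sv where "sv y = r2 t y - cot y * r1 t y" for y
  define s1 where "s1 y = r3 t y + q y * r1 t y - cot y * r2 t y" for y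
  define s2 where "s2 y = r4 t y + 2 * q y * r2 t y - 2 * cot y * q y * r1 t y - cot y * r3 t y" for y
  define G1 where "G1 y = (s1 y - k * cot y * sv y) * W y" for y
  define G2 where "G2 y = (s2 y + k * q y * sv y - k * cot y * s1 y - k * cot y * (s1 y - k * cot y * sv y)) * W y" for y
  have g_eq: "g y = sv y * W y" for y
    by (simp add: g_def sv_def W_def ast k_def divide_inverse)
  have Dg: "(g has_real_derivative G1 y) (at y)" if "y \<in> I" for y
    unfolding g_eq[abs_def] sv_def G1_def s1_def using that
    by (auto intro!: derivative_eq_intros D1 D2 Dc DWk simp: algebra_simps)
  have dg: "deriv g y = G1 y" if "y \<in> I" for y using Dg[OF that] by (rule DERIV_imp_deriv)
  have DG1: "(G1 has_real_derivative G2 \<theta>) (at \<theta>)"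
    unfolding G1_def[abs_def] sv_def s1_def G2_def s2_def using tU
    by (auto intro!: derivative_eq_intros D1 D2 D3 Dc Dq DWk simp: algebra_simps)
  have ddg: "deriv (deriv g) \<theta> = G2 \<theta>"
  proof -
    have "(deriv g has_real_derivative G2 \<theta>) (at \<theta>)"
      by (rule has_field_derivative_transform_within_open[OF DG1 oU(2) tU(2)]) (simp add: dg)
    then show ?thesis by (rule DERIV_imp_deriv)
  qed
  have qth: "real n ^ 2 / (sin \<theta>)^2 = real n ^ 2 * q \<theta>"
    using cot_sq[OF sinI[OF tU(2)]] by (simp add: q_def divide_inverse)
  have aeq: "a = -(2*real n+3)*b" using assms(1,2) by (simp add: field_simps)
  have MI: "E2 \<theta> - cot \<theta> * E1 \<theta> = b * (s2 \<theta> + k * q \<theta> * sv \<theta> - k * cot \<theta> * s1 \<theta> - k * cot \<theta> * (s1 \<theta> - k * cot \<theta> * sv \<theta>)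
     + cot \<theta> * (s1 \<theta> - k * cot \<theta> * sv \<theta>) + (real n * (real n + 1) - real n ^ 2 * q \<theta>) * sv \<theta>)"
    unfolding E1_def E2_def s1_def s2_def sv_def q_def k_def aeq by (simp add: algebra_simps power2_eq_square)
  show ?thesis
    unfolding LHS legendre_op_def g_def[symmetric] ddg dg[OF tU(2)] qth
    unfolding G1_def G2_def g_eq MI by (simp add: algebra_simps)
qed

end
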